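(* Let $m\ge2$, $d\ge1$, $\sigma$ an invertible real $m\times m$ matrix and $A_1,\dots,A_d$ real $m\times m$ matrices, $G_l:=A_l\sigma-\sigma^*A_l^*$, and assume the Hörmander condition: there is $\lambda>0$ with $\sum_{i,j=1}^m|\sum_{l=1}^d(G_l)_{ij}a_l|^2\ge\lambda|a|^2$ for all $a\in\mathbb{R}^d$. Then there are constants $c_1(G),c_2(G)>0$ depending only on $G_1,\dots,G_d$ such that for all $f\in C^3(\mathbb{R}^{m+d})$ and $r>0$, $$\Gamma_2(f)+r\,\Gamma_2^Z(f)\ge\frac{(Lf)^2}{m}+\frac{c_2(G)\,\Gamma^Z(f)}{4}-\frac{c_1(G)}{r}\Gamma(f).$$
   Context: On $\mathbb{R}^{m+d}$ with coordinates $(x,y)$: $X_i=\sum_{k=1}^m\sigma_{ki}\partial_{x_k}+\sum_{l=1}^d(A_lx)_i\partial_{y_l}$ ($1\le i\le m$), $L=\frac12\sum_{i=1}^mX_i^2$, $\Gamma(f,g)=\frac12\sum_{i=1}^m(X_if)(X_ig)$, $\Gamma^Z(f,g)=\frac12\sum_{l=1}^d(\partial_{y_l}f)(\partial_{y_l}g)$, $\Gamma(f)=\Gamma(f,f)$, $\Gamma^Z(f)=\Gamma^Z(f,f)$, $\Gamma_2(f)=\frac12L\Gamma(f,f)-\Gamma(f,Lf)$, $\Gamma_2^Z(f)=\frac12L\Gamma^Z(f,f)-\Gamma^Z(f,Lf)$. *)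

theory Defs
  imports "HOL-Analysis.Analysis"
begin

text \<open>Points of R^(m+d) are pairs (x,y) with x in R^m, y in R^d.
  Index types 'm, 'd are finite types of cardinality m and d.\<close>

definition dx :: "'m::finite \<Rightarrow> ((real^'m) \<times> (real^'d) \<Rightarrow> real) \<Rightarrow> (real^'m) \<times> (real^'d) \<Rightarrow> real" where
  "dx k f p = frechet_derivative f (at p) (axis k 1, 0)"

definition dy :: "'d::finite \<Rightarrow> ((real^'m::finite) \<times> (real^'d) \<Rightarrow> real) \<Rightarrow> (real^'m) \<times> (real^'d) \<Rightarrow> real" where
  "dy l f p = frechet_derivative f (at p) (0, axis l 1)"

definition Xf :: "real^'m^'m \<Rightarrow> ('d \<Rightarrow> real^'m^'m) \<Rightarrow> 'm::finite
    \<Rightarrow> ((real^'m) \<times> (real^'d::finite) \<Rightarrow> real) \<Rightarrow> (real^'m) \<times> (real^'d) \<Rightarrow> real" where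
  "Xf \<sigma> A i f p = (\<Sum>k\<in>UNIV. \<sigma>$k$i * dx k f p) + (\<Sum>l\<in>UNIV. (A l *v fst p)$i * dy l f p)"

definition Lop :: "real^'m^'m \<Rightarrow> ('d \<Rightarrow> real^'m^'m)
    \<Rightarrow> ((real^'m::finite) \<times> (real^'d::finite) \<Rightarrow> real) \<Rightarrow> (real^'m) \<times> (real^'d) \<Rightarrow> real" where
  "Lop \<sigma> A f p = (1/2) * (\<Sum>i\<in>UNIV. Xf \<sigma> A i (Xf \<sigma> A i f) p)"

definition Gam :: "real^'m^'m \<Rightarrow> ('d \<Rightarrow> real^'m^'m)
    \<Rightarrow> ((real^'m::finite) \<times> (real^'d::finite) \<Rightarrow> real) \<Rightarrow> ((real^'m) \<times> (real^'d) \<Rightarrow> real) \<Rightarrow> (real^'m) \<times> (real^'d) \<Rightarrow> real" where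
  "Gam \<sigma> A f g p = (1/2) * (\<Sum>i\<in>UNIV. Xf \<sigma> A i f p * Xf \<sigma> A i g p)"

definition GamZ :: "((real^'m::finite) \<times> (real^'d::finite) \<Rightarrow> real) \<Rightarrow> ((real^'m) \<times> (real^'d) \<Rightarrow> real) \<Rightarrow> (real^'m) \<times> (real^'d) \<Rightarrow> real" where
  "GamZ f g p = (1/2) * (\<Sum>l\<in>UNIV. dy l f p * dy l g p)"

definition Gam2 :: "real^'m^'m \<Rightarrow> ('d \<Rightarrow> real^'m^'m)
    \<Rightarrow> ((real^'m::finite) \<times> (real^'d::finite) \<Rightarrow> real) \<Rightarrow> (real^'m) \<times> (real^'d) \<Rightarrow> real" where
  "Gam2 \<sigma> A f p = (1/2) * Lop \<sigma> A (Gam \<sigma> A f f) p - Gam \<sigma> A f (Lop \<sigma> A f) p"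

definition Gam2Z :: "real^'m^'m \<Rightarrow> ('d \<Rightarrow> real^'m^'m)
    \<Rightarrow> ((real^'m::finite) \<times> (real^'d::finite) \<Rightarrow> real) \<Rightarrow> (real^'m) \<times> (real^'d) \<Rightarrow> real" where
  "Gam2Z \<sigma> A f p = (1/2) * Lop \<sigma> A (GamZ f f) p - GamZ f (Lop \<sigma> A f) p"

fun Ck :: "nat \<Rightarrow> ('a::euclidean_space \<Rightarrow> real) \<Rightarrow> bool" where
  "Ck 0 f = continuous_on UNIV f"
| "Ck (Suc k) f = (continuous_on UNIV f \<and> f differentiable_on UNIV \<and>
      (\<forall>b\<in>Basis. Ck k (\<lambda>p. frechet_derivative f (at p) b)))"

definition Gmat :: "real^'m^'m \<Rightarrow> ('d \<Rightarrow> real^'m^'m) \<Rightarrow> 'd \<Rightarrow> real^'m^'m" where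
  "Gmat \<sigma> A l = A l ** \<sigma> - transpose \<sigma> ** transpose (A l)"

definition hoermander :: "('d::finite \<Rightarrow> real^'m::finite^'m) \<Rightarrow> bool" where
  "hoermander G \<longleftrightarrow> (\<exists>lam>0. \<forall>a::real^'d.
     (\<Sum>i\<in>UNIV. \<Sum>j\<in>UNIV. \<bar>\<Sum>l\<in>UNIV. G l $ i $ j * a $ l\<bar>^2) \<ge> lam * (norm a)^2)"

end

theory Submission
  imports Defs
begin


definition D :: "'a::euclidean_space \<Rightarrow> ('a \<Rightarrow> real) \<Rightarrow> 'a \<Rightarrow> real" where
  "D u g = (\<lambda>p. frechet_derivative g (at p) u)"

lemma D_has: "g differentiable (at q) \<Longrightarrow> (g has_derivative (\<lambda>h. D h g q)) (at q)"
  unfolding D_def using frechet_derivative_works by (metis eta_contract_eq) 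

lemma D_eq: "(g has_derivative g') (at q) \<Longrightarrow> D h g q = g' h"
  unfolding D_def using frechet_derivative_at by metis

lemma D_linear: "g differentiable (at q) \<Longrightarrow> linear (\<lambda>h. D h g q)"
  unfolding D_def using linear_frechet_derivative by (metis eta_contract_eq) 

lemma D_lin: "g differentiable (at q) \<Longrightarrow> D v g q = (\<Sum>b\<in>Basis. (v \<bullet> b) * D b g q)"
proof -
  assume g: "g differentiable (at q)"
  interpret linear "\<lambda>h. D h g q" using D_linear[OF g] .
  have "D v g q = D (\<Sum>b\<in>Basis. (v \<bullet> b) *\<^sub>R b) g q" by (simp add: euclidean_representation)
  also have "\<dots> = (\<Sum>b\<in>Basis. (v \<bullet> b) * D b g q)" by (simp add: sum scale)
  finally show ?thesis .
qed

lemma line_deriv: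
  assumes "\<forall>q. h differentiable (at q)"
  shows "((\<lambda>s. h (a + s *\<^sub>R b)) has_real_derivative D b h (a + s *\<^sub>R b)) (at s)"
proof -
  have 1: "((\<lambda>s. a + s *\<^sub>R b) has_derivative (\<lambda>ds. ds *\<^sub>R b)) (at s)"
    by (auto intro!: derivative_eq_intros)
  have 2: "(h has_derivative (\<lambda>k. D k h (a + s *\<^sub>R b))) (at (a + s *\<^sub>R b))"
    using D_has assms by blast
  have "((\<lambda>s. h (a + s *\<^sub>R b)) has_derivative (\<lambda>ds. D (ds *\<^sub>R b) h (a + s *\<^sub>R b))) (at s)"
    using diff_chain_at[OF 1 2] by (simp add: o_def)
  moreover have "(\<lambda>ds. D (ds *\<^sub>R b) h (a + s *\<^sub>R b)) = (\<lambda>ds. ds * D b h (a + s *\<^sub>R b))"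
  proof -
    interpret linear "\<lambda>k. D k h (a + s *\<^sub>R b)" using D_linear assms by blast
    show ?thesis by (simp add: scale)
  qed
  ultimately show ?thesis unfolding has_field_derivative_def
    by (simp add: mult.commute[of _ "D b h (a + s *\<^sub>R b)"])
qed

lemma delta_mvt:
  assumes g: "\<forall>q. g differentiable (at q)" and gu: "\<forall>q. D u g differentiable (at q)" and t: "t > 0"
  shows "\<exists>\<xi> \<eta>. 0 < \<xi> \<and> \<xi> < t \<and> 0 < \<eta> \<and> \<eta> < t \<and>
     g (p + t *\<^sub>R v + t *\<^sub>R u) - g (p + t *\<^sub>R u) - g (p + t *\<^sub>R v) + g p
       = t\<^sup>2 * D v (D u g) (p + \<xi> *\<^sub>R u + \<eta> *\<^sub>R v)"
proof -
  define \<phi> where "\<phi> s = g ((p + t *\<^sub>R v) + s *\<^sub>R u) - g (p + s *\<^sub>R u)" for s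
  have "DERIV \<phi> s :> D u g ((p + t *\<^sub>R v) + s *\<^sub>R u) - D u g (p + s *\<^sub>R u)" for s
    unfolding \<phi>_def by (intro DERIV_diff line_deriv g)
  from MVT2[OF t this] obtain \<xi> where xi: "0 < \<xi>" "\<xi> < t"
    "\<phi> t - \<phi> 0 = (t - 0) * (D u g ((p + t *\<^sub>R v) + \<xi> *\<^sub>R u) - D u g (p + \<xi> *\<^sub>R u))"
    by blast
  define \<psi> where "\<psi> s = D u g ((p + \<xi> *\<^sub>R u) + s *\<^sub>R v)" for s
  have "DERIV \<psi> s :> D v (D u g) ((p + \<xi> *\<^sub>R u) + s *\<^sub>R v)" for s
    unfolding \<psi>_def by (intro line_deriv gu)
  from MVT2[OF t this] obtain \<eta> where eta: "0 < \<eta>" "\<eta> < t"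
    "\<psi> t - \<psi> 0 = (t - 0) * D v (D u g) ((p + \<xi> *\<^sub>R u) + \<eta> *\<^sub>R v)"
    by blast
  have e1: "\<phi> t - \<phi> 0 = g (p + t *\<^sub>R v + t *\<^sub>R u) - g (p + t *\<^sub>R u) - g (p + t *\<^sub>R v) + g p"
    unfolding \<phi>_def by simp
  have e2: "\<psi> t - \<psi> 0 = D u g ((p + t *\<^sub>R v) + \<xi> *\<^sub>R u) - D u g (p + \<xi> *\<^sub>R u)"
    unfolding \<psi>_def by (simp add: algebra_simps)
  show ?thesis
    using xi eta e1 e2 by (intro exI[of _ \<xi>] exI[of _ \<eta>]) (simp add: power2_eq_square)
qed

lemma clairaut_basis:
  assumes g: "\<forall>q. g differentiable (at q)"
    and gu: "\<forall>q. D u g differentiable (at q)" and gv: "\<forall>q. D v g differentiable (at q)"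
    and c1: "continuous_on UNIV (D v (D u g))" and c2: "continuous_on UNIV (D u (D v g))"
  shows "D v (D u g) p = D u (D v g) p"
proof (rule ccontr)
  assume ne: "D v (D u g) p \<noteq> D u (D v g) p"
  define e where "e = \<bar>D v (D u g) p - D u (D v g) p\<bar> / 2"
  have e: "e > 0" using ne unfolding e_def by simp
  obtain d1 where d1: "d1 > 0" "\<And>q. dist q p < d1 \<Longrightarrow> dist (D v (D u g) q) (D v (D u g) p) < e"
    using c1 e unfolding continuous_on_iff by blast
  obtain d2 where d2: "d2 > 0" "\<And>q. dist q p < d2 \<Longrightarrow> dist (D u (D v g) q) (D u (D v g) p) < e"
    using c2 e unfolding continuous_on_iff by blast
  define t where "t = min d1 d2 / (norm u + norm v + 1)"
  have t: "t > 0" using d1 d2 unfolding t_def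
    by (intro divide_pos_pos) (auto intro: add_nonneg_pos)
  have tb: "t * (norm u + norm v) < min d1 d2"
  proof -
    have "t * (norm u + norm v) < t * (norm u + norm v + 1)" using t by simp
    also have "\<dots> = min d1 d2"
    proof -
      have "norm u + norm v + 1 > 0" using norm_ge_zero[of u] norm_ge_zero[of v] by linarith
      then show ?thesis unfolding t_def by simp
    qed
    finally show ?thesis .
  qed
  have close: "dist (p + a *\<^sub>R u + b *\<^sub>R v) p < min d1 d2" if "0 < a" "a < t" "0 < b" "b < t" for a b
  proof -
    have "dist (p + a *\<^sub>R u + b *\<^sub>R v) p = norm (a *\<^sub>R u + b *\<^sub>R v)" by (simp add: dist_norm)
    also have "\<dots> \<le> a * norm u + b * norm v"
      using norm_triangle_ineq[of "a *\<^sub>R u" "b *\<^sub>R v"] that by simp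
    also have "\<dots> \<le> t * norm u + t * norm v"
      using that by (intro add_mono mult_right_mono) auto
    also have "\<dots> < min d1 d2" using tb by (simp add: algebra_simps)
    finally show ?thesis .
  qed
  obtain x1 y1 where xy1: "0 < x1" "x1 < t" "0 < y1" "y1 < t"
    "g (p + t *\<^sub>R v + t *\<^sub>R u) - g (p + t *\<^sub>R u) - g (p + t *\<^sub>R v) + g p
       = t\<^sup>2 * D v (D u g) (p + x1 *\<^sub>R u + y1 *\<^sub>R v)"
    using delta_mvt[OF g gu t] by blast
  obtain x2 y2 where xy2: "0 < x2" "x2 < t" "0 < y2" "y2 < t"
    "g (p + t *\<^sub>R u + t *\<^sub>R v) - g (p + t *\<^sub>R v) - g (p + t *\<^sub>R u) + g p
       = t\<^sup>2 * D u (D v g) (p + x2 *\<^sub>R v + y2 *\<^sub>R u)"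
    using delta_mvt[OF g gv t] by blast
  have "t\<^sup>2 * D v (D u g) (p + x1 *\<^sub>R u + y1 *\<^sub>R v) = t\<^sup>2 * D u (D v g) (p + x2 *\<^sub>R v + y2 *\<^sub>R u)"
    using xy1(5) xy2(5) by (simp add: algebra_simps)
  hence eq: "D v (D u g) (p + x1 *\<^sub>R u + y1 *\<^sub>R v) = D u (D v g) (p + x2 *\<^sub>R v + y2 *\<^sub>R u)"
    using t by simp
  have a1: "dist (D v (D u g) (p + x1 *\<^sub>R u + y1 *\<^sub>R v)) (D v (D u g) p) < e"
    using d1(2) close[OF xy1(1-4)] by simp
  have a2: "dist (D u (D v g) (p + x2 *\<^sub>R v + y2 *\<^sub>R u)) (D u (D v g) p) < e"
    using d2(2) close[of y2 x2] xy2(1-4) by (simp add: add.commute add.left_commute)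
  have aux: "\<bar>x - a\<bar> < \<bar>a - b\<bar> / 2 \<Longrightarrow> \<bar>x - b\<bar> < \<bar>a - b\<bar> / 2 \<Longrightarrow> False" for x a b :: real
    by (auto simp: abs_if split: if_splits)
  from a1 a2 eq show False unfolding e_def dist_real_def using aux by metis
qed

lemma D_comb:
  assumes u: "\<forall>q. u differentiable (at q)" and ub: "\<forall>b\<in>Basis. D b u differentiable (at p)"
  shows "((D a u) has_derivative (\<lambda>h. \<Sum>b\<in>Basis. (a \<bullet> b) * D h (D b u) p)) (at p)"
proof -
  have e: "D a u = (\<lambda>q. \<Sum>b\<in>Basis. (a \<bullet> b) * D b u q)"
    using D_lin u by blast
  show ?thesis unfolding e
    by (intro has_derivative_sum has_derivative_mult_right D_has) (use ub in auto)
qed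

lemma D_comb_eq:
  assumes "\<forall>q. u differentiable (at q)" "\<forall>b\<in>Basis. D b u differentiable (at p)"
  shows "D h (D a u) p = (\<Sum>b\<in>Basis. (a \<bullet> b) * D h (D b u) p)"
  using D_eq[OF D_comb[OF assms]] .

lemma D_comb_diff:
  assumes "\<forall>q. u differentiable (at q)" "\<forall>b\<in>Basis. D b u differentiable (at p)"
  shows "D a u differentiable (at p)"
  using D_comb[OF assms] unfolding differentiable_def by blast

lemma sym_all:
  assumes u: "\<forall>q. u differentiable (at q)" and ub: "\<forall>b\<in>Basis. \<forall>q. D b u differentiable (at q)"
    and s: "\<forall>b\<in>Basis. \<forall>c\<in>Basis. D c (D b u) p = D b (D c u) p"
  shows "D y (D x u) p = D x (D y u) p"
proof -
  have "D y (D x u) p = (\<Sum>b\<in>Basis. (x \<bullet> b) * D y (D b u) p)"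
    using D_comb_eq[of u p y x] u ub by simp
  also have "\<dots> = (\<Sum>b\<in>Basis. (x \<bullet> b) * (\<Sum>c\<in>Basis. (y \<bullet> c) * D c (D b u) p))"
    by (rule sum.cong[OF refl]) (metis D_lin ub)
  also have "\<dots> = (\<Sum>b\<in>Basis. \<Sum>c\<in>Basis. (x \<bullet> b) * (y \<bullet> c) * D b (D c u) p)"
    using s by (simp add: sum_distrib_left mult.assoc)
  also have "\<dots> = (\<Sum>c\<in>Basis. \<Sum>b\<in>Basis. (x \<bullet> b) * (y \<bullet> c) * D b (D c u) p)"
    by (rule sum.swap)
  also have "\<dots> = (\<Sum>c\<in>Basis. (y \<bullet> c) * (\<Sum>b\<in>Basis. (x \<bullet> b) * D b (D c u) p))"
    by (simp add: sum_distrib_left mult_ac)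
  also have "\<dots> = (\<Sum>c\<in>Basis. (y \<bullet> c) * D x (D c u) p)"
    by (rule sum.cong[OF refl]) (metis D_lin ub)
  also have "\<dots> = D x (D y u) p"
    using D_comb_eq[of u p x y] u ub by simp
  finally show ?thesis .
qed

definition Good :: "('a::euclidean_space \<Rightarrow> real) \<Rightarrow> bool" where
  "Good u \<longleftrightarrow> (\<forall>q. u differentiable (at q)) \<and> (\<forall>b\<in>Basis. \<forall>q. D b u differentiable (at q))
      \<and> (\<forall>p x y. D y (D x u) p = D x (D y u) p)"

lemma Ck_Suc_D: "Ck (Suc k) f = (continuous_on UNIV f \<and> (\<forall>q. f differentiable (at q)) \<and> (\<forall>b\<in>Basis. Ck k (D b f)))"
  by (simp add: D_def differentiable_on_def)

lemma Ck_0: "Ck 0 f = continuous_on UNIV f" by simp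

lemma Ck_cont: "Ck k f \<Longrightarrow> continuous_on UNIV f"
  by (cases k) auto

lemma Good_Ck2:
  assumes "Ck (Suc (Suc k)) f" shows "Good f"
proof -
  have f: "\<forall>q. f differentiable (at q)" and fb: "\<forall>b\<in>Basis. \<forall>q. D b f differentiable (at q)"
    and fc: "\<forall>b\<in>Basis. \<forall>c\<in>Basis. continuous_on UNIV (D c (D b f))"
  proof -
    have A: "continuous_on UNIV f \<and> (\<forall>q. f differentiable (at q)) \<and> (\<forall>b\<in>Basis. Ck (Suc k) (D b f))"
      using assms Ck_Suc_D[of "Suc k" f] by blast
    have B: "\<forall>b\<in>Basis. continuous_on UNIV (D b f) \<and> (\<forall>q. D b f differentiable (at q)) \<and> (\<forall>c\<in>Basis. Ck k (D c (D b f)))"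
      using A Ck_Suc_D[of k] by blast
    show "\<forall>q. f differentiable (at q)" "\<forall>b\<in>Basis. \<forall>q. D b f differentiable (at q)"
      "\<forall>b\<in>Basis. \<forall>c\<in>Basis. continuous_on UNIV (D c (D b f))"
      using A B Ck_cont by blast+
  qed
  have "\<forall>b\<in>Basis. \<forall>c\<in>Basis. D c (D b f) p = D b (D c f) p" for p
    using clairaut_basis f fb fc by blast
  then show ?thesis unfolding Good_def using f fb sym_all[OF f fb] by blast
qed

lemma Good_Ck3:
  assumes "Ck 3 f" shows "Good f" "\<forall>b\<in>Basis. Good (D b f)"
proof -
  have 3: "Ck (Suc (Suc (Suc 0))) f" using assms by (simp add: numeral_3_eq_3)
  show "Good f" using Good_Ck2 3 by blast
  have "\<forall>b\<in>Basis. Ck (Suc (Suc 0)) (D b f)" using 3 Ck_Suc_D[of "Suc (Suc 0)" f] by blast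
  then show "\<forall>b\<in>Basis. Good (D b f)" using Good_Ck2 by blast
qed

lemma affine_coef_has:
  fixes M :: "'a::euclidean_space \<Rightarrow> 'a"
  assumes "linear M"
  shows "((\<lambda>q. (w + M q) \<bullet> b) has_derivative (\<lambda>h. M h \<bullet> b)) (at p)"
proof -
  have "((\<lambda>q. w + M q) has_derivative (\<lambda>h. 0 + M h)) (at p)"
    by (intro has_derivative_add has_derivative_const linear_imp_has_derivative assms)
  then show ?thesis using has_derivative_inner_left by fastforce
qed

lemma X_has:
  fixes M :: "'a::euclidean_space \<Rightarrow> 'a"
  assumes u: "\<forall>q. u differentiable (at q)" and ub: "\<forall>b\<in>Basis. D b u differentiable (at p)"
    and M: "linear M"
  shows "((\<lambda>q. D (w + M q) u q) has_derivative (\<lambda>h. D h (D (w + M p) u) p + D (M h) u p)) (at p)"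
proof -
  have e: "(\<lambda>q. D (w + M q) u q) = (\<lambda>q. \<Sum>b\<in>Basis. ((w + M q) \<bullet> b) * D b u q)"
    using D_lin u by blast
  have h: "((\<lambda>q. \<Sum>b\<in>Basis. ((w + M q) \<bullet> b) * D b u q) has_derivative
     (\<lambda>h. \<Sum>b\<in>Basis. ((w + M p) \<bullet> b) * D h (D b u) p + (M h \<bullet> b) * D b u p)) (at p)"
    by (intro has_derivative_sum has_derivative_mult affine_coef_has M D_has) (use ub in auto)
  have "(\<lambda>h. \<Sum>b\<in>Basis. ((w + M p) \<bullet> b) * D h (D b u) p + (M h \<bullet> b) * D b u p)
      = (\<lambda>h. D h (D (w + M p) u) p + D (M h) u p)"
  proof
    fix h
    show "(\<Sum>b\<in>Basis. ((w + M p) \<bullet> b) * D h (D b u) p + (M h \<bullet> b) * D b u p)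
      = D h (D (w + M p) u) p + D (M h) u p"
      using D_comb_eq[OF u ub, of h "w + M p"] D_lin[of u p "M h"] u by (simp add: sum.distrib)
  qed
  with h e show ?thesis by simp
qed

lemma X_diff:
  fixes M :: "'a::euclidean_space \<Rightarrow> 'a"
  assumes "\<forall>q. u differentiable (at q)" "\<forall>b\<in>Basis. D b u differentiable (at p)" "linear M"
  shows "(\<lambda>q. D (w + M q) u q) differentiable (at p)"
  using X_has[OF assms] unfolding differentiable_def by blast

lemma X_D:
  fixes M :: "'a::euclidean_space \<Rightarrow> 'a"
  assumes "\<forall>q. u differentiable (at q)" "\<forall>b\<in>Basis. D b u differentiable (at p)" "linear M"
  shows "D h (\<lambda>q. D (w + M q) u q) p = D h (D (w + M p) u) p + D (M h) u p"
  using D_eq[OF X_has[OF assms]] .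

definition XV :: "'a::euclidean_space \<Rightarrow> ('a \<Rightarrow> 'a) \<Rightarrow> ('a \<Rightarrow> real) \<Rightarrow> 'a \<Rightarrow> real" where
  "XV w M u q = D (w + M q) u q"

lemma D_add:
  assumes "f differentiable (at p)" "g differentiable (at p)"
  shows "D k (\<lambda>q. f q + g q) p = D k f p + D k g p"
  using D_eq[OF has_derivative_add[OF D_has[OF assms(1)] D_has[OF assms(2)]]] .

lemma Good_diff: "Good u \<Longrightarrow> u differentiable (at q)" unfolding Good_def by blast
lemma Good_Ddiff: "Good u \<Longrightarrow> D a u differentiable (at q)"
  unfolding Good_def by (intro D_comb_diff) auto
lemma Good_sym: "Good u \<Longrightarrow> D y (D x u) p = D x (D y u) p" unfolding Good_def by blast

lemma Good_D:
  fixes u :: "'a::euclidean_space \<Rightarrow> real"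
  assumes u: "Good u" and ub: "\<forall>b\<in>Basis. Good (D b u)"
  shows "Good (D a u)"
proof -
  have e: "D a u = (\<lambda>q. \<Sum>b\<in>Basis. (a \<bullet> b) * D b u q)"
    using D_lin Good_diff[OF u] by blast
  have e2: "D x (D a u) = (\<lambda>q. \<Sum>b\<in>Basis. (a \<bullet> b) * D x (D b u) q)" for x
  proof
    fix q show "D x (D a u) q = (\<Sum>b\<in>Basis. (a \<bullet> b) * D x (D b u) q)"
      unfolding e by (intro D_eq has_derivative_sum has_derivative_mult_right D_has Good_Ddiff u)
  qed
  have e3: "D y (D x (D a u)) p = (\<Sum>b\<in>Basis. (a \<bullet> b) * D y (D x (D b u)) p)" for x y p
    unfolding e2 using ub
    by (intro D_eq has_derivative_sum has_derivative_mult_right D_has Good_Ddiff) auto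
  show ?thesis unfolding Good_def
  proof (intro conjI allI ballI)
    fix q show "D a u differentiable (at q)" using Good_Ddiff[OF u] .
  next
    fix b :: 'a and q assume b: "b \<in> Basis"
    have "D b (D a u) = D a (D b u)" using Good_sym[OF u] by blast
    then show "D b (D a u) differentiable (at q)" using Good_Ddiff ub b by metis
  next
    fix p x y show "D y (D x (D a u)) p = D x (D y (D a u)) p"
      unfolding e3
    proof (intro sum.cong refl)
      fix b :: 'a assume "b \<in> Basis"
      then have "Good (D b u)" using ub by blast
      then show "(a \<bullet> b) * D y (D x (D b u)) p = (a \<bullet> b) * D x (D y (D b u)) p"
        using Good_sym by metis
    qed
  qed
qed

lemma DX_eq:
  fixes M :: "'a::euclidean_space \<Rightarrow> 'a"
  assumes u: "Good u" and M: "linear M"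
  shows "D h (XV w M u) = (\<lambda>q. XV w M (D h u) q + D (M h) u q)"
proof
  fix q
  have "D h (XV w M u) q = D h (D (w + M q) u) q + D (M h) u q"
    unfolding XV_def[abs_def] using u M by (intro X_D) (auto simp: Good_def)
  also have "\<dots> = XV w M (D h u) q + D (M h) u q"
    unfolding XV_def using Good_sym[OF u] by simp
  finally show "D h (XV w M u) q = XV w M (D h u) q + D (M h) u q" .
qed

lemma XV_diff:
  fixes M :: "'a::euclidean_space \<Rightarrow> 'a"
  assumes u: "Good u" and M: "linear M"
  shows "XV w M u differentiable (at q)"
  unfolding XV_def[abs_def] using u M by (intro X_diff) (auto simp: Good_def)

lemma Good_XV:
  fixes M :: "'a::euclidean_space \<Rightarrow> 'a"
  assumes u: "Good u" and ub: "\<forall>b\<in>Basis. Good (D b u)" and M: "linear M"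
  shows "Good (XV w M u)"
  unfolding Good_def
proof (intro conjI allI ballI)
  fix q show "XV w M u differentiable (at q)" using XV_diff[OF u M] .
next
  fix b :: 'a and q assume b: "b \<in> Basis"
  show "D b (XV w M u) differentiable (at q)" unfolding DX_eq[OF u M]
    by (intro differentiable_add XV_diff Good_Ddiff M u) (use ub b in auto)
next
  fix p x y
  have Gx: "Good (D x u)" "Good (D y u)" using Good_D u ub by blast+
  have "D y (D x (XV w M u)) p = D y (XV w M (D x u)) p + D y (D (M x) u) p"
    unfolding DX_eq[OF u M] by (intro D_add XV_diff Good_Ddiff M Gx u)
  also have "\<dots> = D y (D (w + M p) (D x u)) p + D (M y) (D x u) p + D (M x) (D y u) p"
    unfolding DX_eq[OF Gx(1) M] using Good_sym[OF Gx(1)] Good_sym[OF u] by (simp add: XV_def)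
  also have "D y (D (w + M p) (D x u)) p = D x (D (w + M p) (D y u)) p"
  proof -
    have G: "Good (D (w + M p) u)" using Good_D u ub by blast
    have "D y (D (w + M p) (D x u)) p = D y (D x (D (w + M p) u)) p"
      using ext[of "D x (D (w + M p) u)" "D (w + M p) (D x u)", OF Good_sym[OF u]] by simp
    also have "\<dots> = D x (D y (D (w + M p) u)) p" using Good_sym[OF G] .
    also have "\<dots> = D x (D (w + M p) (D y u)) p"
      using ext[of "D y (D (w + M p) u)" "D (w + M p) (D y u)", OF Good_sym[OF u]] by simp
    finally show ?thesis .
  qed
  also have "D x (D (w + M p) (D y u)) p + D (M y) (D x u) p + D (M x) (D y u) p
     = D x (XV w M (D y u)) p + D x (D (M y) u) p"
    unfolding DX_eq[OF Gx(2) M] using Good_sym[OF Gx(2)] Good_sym[OF u] by (simp add: XV_def)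
  also have "\<dots> = D x (D y (XV w M u)) p"
    unfolding DX_eq[OF u M] by (intro D_add[symmetric] XV_diff Good_Ddiff M Gx u)
  finally show "D y (D x (XV w M u)) p = D x (D y (XV w M u)) p" .
qed

lemma XX:
  fixes M :: "'a::euclidean_space \<Rightarrow> 'a"
  assumes u: "Good u" and M: "linear M"
  shows "XV w' M' (XV w M u) p = D (w + M p) (D (w' + M' p) u) p + D (M (w' + M' p)) u p"
proof -
  have "XV w' M' (XV w M u) p = D (w' + M' p) (XV w M u) p" by (simp add: XV_def)
  also have "\<dots> = XV w M (D (w' + M' p) u) p + D (M (w' + M' p)) u p"
    unfolding DX_eq[OF u M] ..
  finally show ?thesis by (simp add: XV_def)
qed

lemma D_zero: "u differentiable (at q) \<Longrightarrow> D 0 u q = 0"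
  using linear_0[OF D_linear] by blast

lemma D_mult:
  assumes "f differentiable (at p)" "g differentiable (at p)"
  shows "D k (\<lambda>q. f q * g q) p = f p * D k g p + D k f p * g p"
  using D_eq[OF has_derivative_mult[OF D_has[OF assms(1)] D_has[OF assms(2)]]] .

lemma D_sum:
  assumes "\<And>i. i \<in> S \<Longrightarrow> f i differentiable (at p)"
  shows "D k (\<lambda>q. \<Sum>i\<in>S. f i q) p = (\<Sum>i\<in>S. D k (f i) p)"
  using D_eq[OF has_derivative_sum[of S f "\<lambda>i h. D h (f i) p", OF D_has[OF assms]]] by simp

lemma D_cmult:
  assumes "f differentiable (at p)"
  shows "D k (\<lambda>q. c * f q) p = c * D k f p"
  using D_eq[OF has_derivative_mult_right[OF D_has[OF assms]]] .



definition wv :: "real^'m^'m \<Rightarrow> 'm \<Rightarrow> (real^'m::finite) \<times> (real^'d::finite)" where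
  "wv \<sigma> i = (\<chi> k. \<sigma>$k$i, 0)"

definition Mv :: "('d \<Rightarrow> real^'m^'m) \<Rightarrow> 'm \<Rightarrow> (real^'m::finite) \<times> (real^'d::finite) \<Rightarrow> (real^'m) \<times> (real^'d)" where
  "Mv A i h = (0, \<chi> l. (A l *v fst h)$i)"

lemma Mv_linear: "linear (Mv A i)"
  by (rule linearI) (auto simp: Mv_def vec_eq_iff matrix_vector_right_distrib matrix_vector_mult_scaleR)

lemma wv_Mv_sum: "wv \<sigma> i + Mv A i q =
   (\<Sum>k\<in>UNIV. \<sigma>$k$i *\<^sub>R (axis k 1, 0)) + (\<Sum>l\<in>UNIV. (A l *v fst q)$i *\<^sub>R (0, axis l 1))"
proof -
  have m: "\<And>c::real. \<And>P. c * (if P then 1 else 0) = (if P then c else 0)" by simp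
  show ?thesis by (simp add: wv_def Mv_def vec_eq_iff fst_sum snd_sum axis_def prod_eq_iff m)
qed

lemma Xf_pt:
  assumes "u differentiable (at q)"
  shows "Xf \<sigma> A i u q = D (wv \<sigma> i + Mv A i q) u q"
proof -
  interpret linear "\<lambda>h. D h u q" using D_linear[OF assms] .
  have "D (wv \<sigma> i + Mv A i q) u q = (\<Sum>k\<in>UNIV. \<sigma>$k$i * D (axis k 1, 0) u q)
     + (\<Sum>l\<in>UNIV. (A l *v fst q)$i * D (0, axis l 1) u q)"
    unfolding wv_Mv_sum by (simp only: add sum scale real_scaleR_def)
  then show ?thesis unfolding Xf_def dx_def dy_def D_def by simp
qed

lemma Xf_XV: "\<forall>q. u differentiable (at q) \<Longrightarrow> Xf \<sigma> A i u = XV (wv \<sigma> i) (Mv A i) u"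
proof (rule ext)
  fix q assume "\<forall>q. u differentiable (at q)"
  then have "u differentiable (at q)" by blast
  then show "Xf \<sigma> A i u q = XV (wv \<sigma> i) (Mv A i) u q" using Xf_pt[of u q] by (simp add: XV_def)
qed

lemma Mv_fst0: "fst h = 0 \<Longrightarrow> Mv A i h = 0"
proof -
  assume h: "fst h = 0"
  then have "(\<chi> l. (A l *v fst h)$i) = 0" by (simp only: h matrix_vector_mult_0_right) (simp add: vec_eq_iff)
  then show ?thesis by (simp add: Mv_def zero_prod_def)
qed

lemma fst_Mv: "fst (Mv A i h) = 0" by (simp add: Mv_def)

lemma Mv_wv: "Mv A i (wv \<sigma> j) = (0, \<chi> l. (A l ** \<sigma>)$i$j)"
  by (simp add: Mv_def wv_def matrix_vector_mult_def matrix_matrix_mult_def)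

lemma D_ydir:
  assumes "u differentiable (at q)"
  shows "D (0, v) u q = (\<Sum>l\<in>UNIV. v$l * dy l u q)"
proof -
  interpret linear "\<lambda>h. D h u q" using D_linear[OF assms] .
  have m: "\<And>c::real. \<And>P. c * (if P then 1 else 0) = (if P then c else 0)" by simp
  have "(0::real^'a, v) = (\<Sum>l\<in>UNIV. v$l *\<^sub>R (0, axis l 1))"
    by (simp add: vec_eq_iff fst_sum snd_sum axis_def prod_eq_iff m)
  then have "D (0, v) u q = D (\<Sum>l\<in>UNIV. v$l *\<^sub>R (0::real^'a, axis l 1)) u q" by simp
  also have "\<dots> = (\<Sum>l\<in>UNIV. v$l * D (0, axis l 1) u q)" by (simp only: sum scale real_scaleR_def)
  finally show ?thesis by (simp add: dy_def D_def)
qed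

lemma Gmat_entry: "Gmat \<sigma> A l $ i $ j = (A l ** \<sigma>)$i$j - (A l ** \<sigma>)$j$i"
proof -
  have "transpose \<sigma> ** transpose (A l) = transpose (A l ** \<sigma>)" by (simp add: matrix_transpose_mul)
  then show ?thesis unfolding Gmat_def by (simp add: transpose_def)
qed

lemma commut:
  assumes u: "Good u"
  shows "Xf \<sigma> A j (Xf \<sigma> A i u) p - Xf \<sigma> A i (Xf \<sigma> A j u) p = (\<Sum>l\<in>UNIV. Gmat \<sigma> A l $ i $ j * dy l u p)"
proof -
  have ud: "\<forall>q. u differentiable (at q)" using Good_diff[OF u] by blast
  have xd: "\<forall>q. XV (wv \<sigma> k) (Mv A k) u differentiable (at q)" for k
    using XV_diff[OF u Mv_linear] by blast
  have L: "Mv A k (wv \<sigma> k' + Mv A k' p) = Mv A k (wv \<sigma> k')" for k k'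
    by (simp add: linear_add[OF Mv_linear] Mv_fst0 fst_Mv)
  have "Xf \<sigma> A j (Xf \<sigma> A i u) p - Xf \<sigma> A i (Xf \<sigma> A j u) p
    = D (Mv A i (wv \<sigma> j)) u p - D (Mv A j (wv \<sigma> i)) u p"
    unfolding Xf_XV[OF ud] Xf_XV[OF xd] XX[OF u Mv_linear] L using Good_sym[OF u] by simp
  also have "\<dots> = (\<Sum>l\<in>UNIV. Gmat \<sigma> A l $ i $ j * dy l u p)"
    unfolding Mv_wv D_ydir[OF ud[rule_format]] Gmat_entry
    by (simp add: sum_subtractf left_diff_distrib)
  finally show ?thesis .
qed



lemma Xf_mult:
  assumes "f differentiable (at p)" "g differentiable (at p)"
  shows "Xf \<sigma> A j (\<lambda>q. f q * g q) p = f p * Xf \<sigma> A j g p + Xf \<sigma> A j f p * g p"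
  using assms by (simp add: Xf_pt D_mult)

lemma Xf_sum:
  assumes "finite S" "\<And>i. i \<in> S \<Longrightarrow> f i differentiable (at p)"
  shows "Xf \<sigma> A j (\<lambda>q. \<Sum>i\<in>S. f i q) p = (\<Sum>i\<in>S. Xf \<sigma> A j (f i) p)"
proof -
  have "(\<lambda>q. \<Sum>i\<in>S. f i q) differentiable (at p)" using assms by (intro differentiable_sum) auto
  then show ?thesis using assms by (simp add: Xf_pt D_sum)
qed

lemma Xf_cmult:
  assumes "f differentiable (at p)"
  shows "Xf \<sigma> A j (\<lambda>q. c * f q) p = c * Xf \<sigma> A j f p"
  using assms by (simp add: Xf_pt D_cmult)

lemma Xf_add:
  assumes "f differentiable (at p)" "g differentiable (at p)"
  shows "Xf \<sigma> A j (\<lambda>q. f q + g q) p = Xf \<sigma> A j f p + Xf \<sigma> A j g p"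
  using assms by (simp add: Xf_pt D_add)

lemma Xf_diff: "Good u \<Longrightarrow> Xf \<sigma> A j u differentiable (at q)"
  using Xf_XV[of u] Good_diff XV_diff[OF _ Mv_linear] by metis

lemma Good_Xf: "Good u \<Longrightarrow> \<forall>b\<in>Basis. Good (D b u) \<Longrightarrow> Good (Xf \<sigma> A j u)"
  using Xf_XV[of u] Good_diff Good_XV[OF _ _ Mv_linear] by metis

lemma dy_D: "dy l u = D (0, axis l 1) u"
  by (simp add: dy_def D_def fun_eq_iff)

lemma Good_dy: "Good u \<Longrightarrow> \<forall>b\<in>Basis. Good (D b u) \<Longrightarrow> Good (dy l u)"
  unfolding dy_D by (rule Good_D)

lemma dy_Xf:
  assumes u: "Good u"
  shows "dy l (Xf \<sigma> A j u) = Xf \<sigma> A j (dy l u)"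
proof -
  have ud: "\<forall>q. u differentiable (at q)" using Good_diff[OF u] by blast
  have dd: "\<forall>q. dy l u differentiable (at q)" unfolding dy_D using Good_Ddiff[OF u] by blast
  have "dy l (Xf \<sigma> A j u) = (\<lambda>q. XV (wv \<sigma> j) (Mv A j) (dy l u) q + D 0 u q)"
    unfolding dy_D Xf_XV[OF ud] DX_eq[OF u Mv_linear] by (simp add: Mv_fst0)
  also have "\<dots> = Xf \<sigma> A j (dy l u)"
  proof -
    have z: "D 0 u = (\<lambda>q. 0)" using D_zero ud by blast
    show ?thesis by (simp add: z Xf_XV[OF dd])
  qed
  finally show ?thesis .
qed

lemma Gam2_expand:
  assumes f: "Good f" and fb: "\<forall>b\<in>Basis. Good (D b f)"
  shows "Gam2 \<sigma> A f p = (\<Sum>j\<in>UNIV. \<Sum>i\<in>UNIV. (Xf \<sigma> A j (Xf \<sigma> A i f) p)\<^sup>2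
      + Xf \<sigma> A i f p * (Xf \<sigma> A j (Xf \<sigma> A j (Xf \<sigma> A i f)) p - Xf \<sigma> A i (Xf \<sigma> A j (Xf \<sigma> A j f)) p)) / 4"
proof -
  let ?X = "Xf \<sigma> A"
  have G1: "Good (?X i f)" for i using Good_Xf f fb by blast
  have d1: "?X i f differentiable (at q)" for i q using Good_diff G1 by blast
  have d2: "?X j (?X i f) differentiable (at q)" for i j q using Xf_diff G1 by blast
  have XG: "?X j (Gam \<sigma> A f f) = (\<lambda>q. \<Sum>i\<in>UNIV. ?X i f q * ?X j (?X i f) q)" for j
  proof
    fix q
    have GG: "Gam \<sigma> A f f = (\<lambda>q. 1/2 * (\<Sum>i\<in>UNIV. ?X i f q * ?X i f q))" by (simp add: Gam_def fun_eq_iff)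
    have "?X j (Gam \<sigma> A f f) q = 1/2 * ?X j (\<lambda>q. \<Sum>i\<in>UNIV. ?X i f q * ?X i f q) q"
      unfolding GG by (rule Xf_cmult) (simp add: d1)
    also have "?X j (\<lambda>q. \<Sum>i\<in>UNIV. ?X i f q * ?X i f q) q
       = (\<Sum>i\<in>UNIV. ?X i f q * ?X j (?X i f) q + ?X j (?X i f) q * ?X i f q)"
      by (simp add: Xf_sum Xf_mult d1)
    finally have "?X j (Gam \<sigma> A f f) q = 1/2 * (\<Sum>i\<in>UNIV. ?X i f q * ?X j (?X i f) q + ?X j (?X i f) q * ?X i f q)" .
    also have "\<dots> = (\<Sum>i\<in>UNIV. ?X i f q * ?X j (?X i f) q)"
      by (simp add: sum_distrib_left)
    finally show "?X j (Gam \<sigma> A f f) q = (\<Sum>i\<in>UNIV. ?X i f q * ?X j (?X i f) q)" .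
  qed
  have LG: "Lop \<sigma> A (Gam \<sigma> A f f) p = 1/2 * (\<Sum>j\<in>UNIV. \<Sum>i\<in>UNIV. ?X i f p * ?X j (?X j (?X i f)) p + (?X j (?X i f) p)\<^sup>2)"
    unfolding Lop_def XG by (simp add: Xf_sum Xf_mult d1 d2 power2_eq_square)
  have LL: "Lop \<sigma> A f = (\<lambda>q. 1/2 * (\<Sum>j\<in>UNIV. ?X j (?X j f) q))" by (simp add: Lop_def fun_eq_iff)
  have GL: "Gam \<sigma> A f (Lop \<sigma> A f) p = 1/2 * (\<Sum>i\<in>UNIV. ?X i f p * (1/2 * (\<Sum>j\<in>UNIV. ?X i (?X j (?X j f)) p)))"
  proof -
    have "?X i (Lop \<sigma> A f) p = 1/2 * (\<Sum>j\<in>UNIV. ?X i (?X j (?X j f)) p)" for i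
    proof -
      have "?X i (Lop \<sigma> A f) p = 1/2 * ?X i (\<lambda>q. \<Sum>j\<in>UNIV. ?X j (?X j f) q) p"
        unfolding LL by (rule Xf_cmult) (simp add: d2)
      also have "?X i (\<lambda>q. \<Sum>j\<in>UNIV. ?X j (?X j f) q) p = (\<Sum>j\<in>UNIV. ?X i (?X j (?X j f)) p)"
        by (simp add: Xf_sum d2)
      finally show ?thesis .
    qed
    then show ?thesis unfolding Gam_def by (simp only:)
  qed
  have GL2: "(\<Sum>i\<in>UNIV. ?X i f p * (1/2 * (\<Sum>j\<in>UNIV. ?X i (?X j (?X j f)) p)))
      = 1/2 * (\<Sum>j\<in>UNIV. \<Sum>i\<in>UNIV. ?X i f p * ?X i (?X j (?X j f)) p)"
  proof -
    have "(\<Sum>i\<in>UNIV. ?X i f p * (1/2 * (\<Sum>j\<in>UNIV. ?X i (?X j (?X j f)) p)))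
      = 1/2 * (\<Sum>i\<in>UNIV. \<Sum>j\<in>UNIV. ?X i f p * ?X i (?X j (?X j f)) p)"
      by (simp add: sum_distrib_left mult_ac)
    also have "(\<Sum>i\<in>UNIV. \<Sum>j\<in>UNIV. ?X i f p * ?X i (?X j (?X j f)) p)
       = (\<Sum>j\<in>UNIV. \<Sum>i\<in>UNIV. ?X i f p * ?X i (?X j (?X j f)) p)"
      by (rule sum.swap)
    finally show ?thesis .
  qed
  let ?S1 = "\<Sum>j\<in>UNIV. \<Sum>i\<in>UNIV. ?X i f p * ?X j (?X j (?X i f)) p + (?X j (?X i f) p)\<^sup>2"
  let ?S2 = "\<Sum>j\<in>UNIV. \<Sum>i\<in>UNIV. ?X i f p * ?X i (?X j (?X j f)) p"
  have S: "(\<Sum>j\<in>UNIV. \<Sum>i\<in>UNIV. (?X j (?X i f) p)\<^sup>2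
      + ?X i f p * (?X j (?X j (?X i f)) p - ?X i (?X j (?X j f)) p)) = ?S1 - ?S2"
    by (simp only: sum_subtractf[symmetric]) (simp add: algebra_simps)
  show ?thesis unfolding Gam2_def LG GL GL2 S by simp
qed



lemma dy_cmult: "f differentiable (at p) \<Longrightarrow> dy l (\<lambda>q. c * f q) p = c * dy l f p"
  unfolding dy_D by (rule D_cmult)
lemma dy_sum: "finite S \<Longrightarrow> (\<And>i. i \<in> S \<Longrightarrow> f i differentiable (at p)) \<Longrightarrow>
   dy l (\<lambda>q. \<Sum>i\<in>S. f i q) p = (\<Sum>i\<in>S. dy l (f i) p)"
  unfolding dy_D by (rule D_sum)

lemma Gam2Z_expand:
  assumes f: "Good f" and fb: "\<forall>b\<in>Basis. Good (D b f)"
  shows "Gam2Z \<sigma> A f p = (\<Sum>j\<in>UNIV. \<Sum>l\<in>UNIV. (Xf \<sigma> A j (dy l f) p)\<^sup>2) / 4"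
proof -
  let ?X = "Xf \<sigma> A"
  have G1: "Good (?X i f)" for i using Good_Xf f fb by blast
  have Gd: "Good (dy l f)" for l using Good_dy f fb by blast
  have d0: "dy l f differentiable (at q)" for l q using Good_diff Gd by blast
  have d1: "?X j (dy l f) differentiable (at q)" for j l q using Xf_diff Gd by blast
  have d2: "?X j (?X i f) differentiable (at q)" for i j q using Xf_diff G1 by blast
  have XG: "?X j (GamZ f f) = (\<lambda>q. \<Sum>l\<in>UNIV. dy l f q * ?X j (dy l f) q)" for j
  proof
    fix q
    have GG: "GamZ f f = (\<lambda>q. 1/2 * (\<Sum>l\<in>UNIV. dy l f q * dy l f q))" by (simp add: GamZ_def fun_eq_iff)
    have "?X j (GamZ f f) q = 1/2 * ?X j (\<lambda>q. \<Sum>l\<in>UNIV. dy l f q * dy l f q) q"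
      unfolding GG by (rule Xf_cmult) (simp add: d0)
    also have "?X j (\<lambda>q. \<Sum>l\<in>UNIV. dy l f q * dy l f q) q
       = (\<Sum>l\<in>UNIV. dy l f q * ?X j (dy l f) q + ?X j (dy l f) q * dy l f q)"
      by (simp add: Xf_sum Xf_mult d0)
    finally show "?X j (GamZ f f) q = (\<Sum>l\<in>UNIV. dy l f q * ?X j (dy l f) q)"
      by (simp add: sum_distrib_left)
  qed
  have LG: "Lop \<sigma> A (GamZ f f) p = 1/2 * (\<Sum>j\<in>UNIV. \<Sum>l\<in>UNIV. dy l f p * ?X j (?X j (dy l f)) p + (?X j (dy l f) p)\<^sup>2)"
    unfolding Lop_def XG by (simp add: Xf_sum Xf_mult d0 d1 power2_eq_square)
  have LL: "Lop \<sigma> A f = (\<lambda>q. 1/2 * (\<Sum>j\<in>UNIV. ?X j (?X j f) q))" by (simp add: Lop_def fun_eq_iff)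
  have com: "dy l (?X j (?X j f)) = ?X j (?X j (dy l f))" for j l
    using dy_Xf[OF G1[of j], of l] dy_Xf[OF f, of l] by simp
  have GL: "GamZ f (Lop \<sigma> A f) p = 1/2 * (\<Sum>l\<in>UNIV. dy l f p * (1/2 * (\<Sum>j\<in>UNIV. ?X j (?X j (dy l f)) p)))"
  proof -
    have "dy l (Lop \<sigma> A f) p = 1/2 * (\<Sum>j\<in>UNIV. ?X j (?X j (dy l f)) p)" for l
    proof -
      have "dy l (Lop \<sigma> A f) p = 1/2 * dy l (\<lambda>q. \<Sum>j\<in>UNIV. ?X j (?X j f) q) p"
        unfolding LL by (rule dy_cmult) (simp add: d2)
      also have "dy l (\<lambda>q. \<Sum>j\<in>UNIV. ?X j (?X j f) q) p = (\<Sum>j\<in>UNIV. ?X j (?X j (dy l f)) p)"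
        by (simp add: dy_sum d2 com)
      finally show ?thesis .
    qed
    then show ?thesis unfolding GamZ_def by (simp only:)
  qed
  have GL2: "(\<Sum>l\<in>UNIV. dy l f p * (1/2 * (\<Sum>j\<in>UNIV. ?X j (?X j (dy l f)) p)))
      = 1/2 * (\<Sum>j\<in>UNIV. \<Sum>l\<in>UNIV. dy l f p * ?X j (?X j (dy l f)) p)"
  proof -
    have "(\<Sum>l\<in>UNIV. dy l f p * (1/2 * (\<Sum>j\<in>UNIV. ?X j (?X j (dy l f)) p)))
      = 1/2 * (\<Sum>l\<in>UNIV. \<Sum>j\<in>UNIV. dy l f p * ?X j (?X j (dy l f)) p)"
      by (simp add: sum_distrib_left mult_ac)
    also have "(\<Sum>l\<in>UNIV. \<Sum>j\<in>UNIV. dy l f p * ?X j (?X j (dy l f)) p)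
       = (\<Sum>j\<in>UNIV. \<Sum>l\<in>UNIV. dy l f p * ?X j (?X j (dy l f)) p)"
      by (rule sum.swap)
    finally show ?thesis .
  qed
  let ?S1 = "\<Sum>j\<in>UNIV. \<Sum>l\<in>UNIV. dy l f p * ?X j (?X j (dy l f)) p + (?X j (dy l f) p)\<^sup>2"
  let ?S2 = "\<Sum>j\<in>UNIV. \<Sum>l\<in>UNIV. dy l f p * ?X j (?X j (dy l f)) p"
  have S: "(\<Sum>j\<in>UNIV. \<Sum>l\<in>UNIV. (?X j (dy l f) p)\<^sup>2) = ?S1 - ?S2"
    by (simp only: sum_subtractf[symmetric]) (simp add: algebra_simps)
  show ?thesis unfolding Gam2Z_def LG GL GL2 S by simp
qed

lemma T_expand:
  assumes f: "Good f" and fb: "\<forall>b\<in>Basis. Good (D b f)"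
  shows "Xf \<sigma> A j (Xf \<sigma> A j (Xf \<sigma> A i f)) p - Xf \<sigma> A i (Xf \<sigma> A j (Xf \<sigma> A j f)) p
     = 2 * (\<Sum>l\<in>UNIV. Gmat \<sigma> A l $ i $ j * Xf \<sigma> A j (dy l f) p)"
proof -
  let ?X = "Xf \<sigma> A"
  have G1: "Good (?X i f)" for i using Good_Xf f fb by blast
  have Gd: "Good (dy l f)" for l using Good_dy f fb by blast
  have d0: "dy l f differentiable (at q)" for l q using Good_diff Gd by blast
  have d2: "?X j (?X i f) differentiable (at q)" for i j q using Xf_diff G1 by blast
  have fe: "?X j (?X i f) = (\<lambda>q. ?X i (?X j f) q + (\<Sum>l\<in>UNIV. Gmat \<sigma> A l $ i $ j * dy l f q))"
  proof
    fix q show "?X j (?X i f) q = ?X i (?X j f) q + (\<Sum>l\<in>UNIV. Gmat \<sigma> A l $ i $ j * dy l f q)"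
      using commut[OF f, of \<sigma> A j i q] by linarith
  qed
  have "?X j (?X j (?X i f)) p = ?X j (?X i (?X j f)) p + (\<Sum>l\<in>UNIV. Gmat \<sigma> A l $ i $ j * ?X j (dy l f) p)"
    unfolding fe by (simp add: Xf_add Xf_sum Xf_cmult d0 d2)
  moreover have "?X j (?X i (?X j f)) p - ?X i (?X j (?X j f)) p = (\<Sum>l\<in>UNIV. Gmat \<sigma> A l $ i $ j * ?X j (dy l f) p)"
    using commut[OF G1[of j]] dy_Xf[OF f] by simp
  ultimately show ?thesis by simp
qed



lemma sq_sym_bound:
  fixes B :: "'m::finite \<Rightarrow> 'm \<Rightarrow> real"
  shows "(\<Sum>j\<in>UNIV. \<Sum>i\<in>UNIV. (B i j)\<^sup>2) \<ge> (\<Sum>i\<in>UNIV. (B i i)\<^sup>2) + (\<Sum>i\<in>UNIV. \<Sum>j\<in>UNIV. (B i j - B j i)\<^sup>2) / 4"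
proof -
  have sw: "(\<Sum>j\<in>UNIV. \<Sum>i\<in>UNIV. (B i j)\<^sup>2) = (\<Sum>i\<in>UNIV. \<Sum>j\<in>UNIV. (B i j)\<^sup>2)" by (rule sum.swap)
  have sw2: "(\<Sum>i\<in>UNIV. \<Sum>j\<in>UNIV. (B j i)\<^sup>2) = (\<Sum>i\<in>UNIV. \<Sum>j\<in>UNIV. (B i j)\<^sup>2)" by (rule sum.swap)
  have id: "(\<Sum>i\<in>UNIV. \<Sum>j\<in>UNIV. (B i j + B j i)\<^sup>2) + (\<Sum>i\<in>UNIV. \<Sum>j\<in>UNIV. (B i j - B j i)\<^sup>2)
     = 2 * (\<Sum>i\<in>UNIV. \<Sum>j\<in>UNIV. (B i j)\<^sup>2) + 2 * (\<Sum>i\<in>UNIV. \<Sum>j\<in>UNIV. (B j i)\<^sup>2)"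
    by (simp add: sum.distrib[symmetric] sum_distrib_left power2_eq_square algebra_simps)
  have diag: "(\<Sum>i\<in>UNIV. \<Sum>j\<in>UNIV. (B i j + B j i)\<^sup>2) \<ge> (\<Sum>i\<in>UNIV. (B i i + B i i)\<^sup>2)"
  proof (rule sum_mono)
    fix i :: 'm
    show "(B i i + B i i)\<^sup>2 \<le> (\<Sum>j\<in>UNIV. (B i j + B j i)\<^sup>2)"
      using member_le_sum[of i UNIV "\<lambda>j. (B i j + B j i)\<^sup>2"] by simp
  qed
  have "(\<Sum>i\<in>UNIV. (B i i + B i i)\<^sup>2) = 4 * (\<Sum>i\<in>UNIV. (B i i)\<^sup>2)"
    by (simp add: sum_distrib_left power2_eq_square algebra_simps)
  with sw sw2 id diag show ?thesis by linarith
qed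

lemma cross_bound:
  fixes w c :: real assumes r: "r > 0"
  shows "w * c / 2 + r * w\<^sup>2 / 4 \<ge> - c\<^sup>2 / (4 * r)"
proof -
  have "0 \<le> (r * w + c)\<^sup>2 / (4 * r)" using r by simp
  also have "(r * w + c)\<^sup>2 / (4 * r) = r * w\<^sup>2 / 4 + w * c / 2 + c\<^sup>2 / (4 * r)"
    using r by (simp add: field_simps power2_eq_square)
  finally show ?thesis by linarith
qed

lemma alg:
  fixes a :: "'m::finite \<Rightarrow> real" and B :: "'m \<Rightarrow> 'm \<Rightarrow> real" and W :: "'m \<Rightarrow> 'd::finite \<Rightarrow> real"
    and z :: "'d \<Rightarrow> real" and G :: "'d \<Rightarrow> 'm \<Rightarrow> 'm \<Rightarrow> real"
  assumes Bz: "\<forall>i j. B i j - B j i = (\<Sum>l\<in>UNIV. G l i j * z l)"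
    and H: "(\<Sum>i\<in>UNIV. \<Sum>j\<in>UNIV. (\<Sum>l\<in>UNIV. G l i j * z l)\<^sup>2) \<ge> lam * (\<Sum>l\<in>UNIV. (z l)\<^sup>2)"
    and r: "r > 0"
  shows "(\<Sum>j\<in>UNIV. \<Sum>i\<in>UNIV. (B i j)\<^sup>2 + a i * (2 * (\<Sum>l\<in>UNIV. G l i j * W j l))) / 4
        + r * ((\<Sum>j\<in>UNIV. \<Sum>l\<in>UNIV. (W j l)\<^sup>2) / 4)
     \<ge> (1/2 * (\<Sum>j\<in>UNIV. B j j))\<^sup>2 / real CARD('m) + (lam/2) * (1/2 * (\<Sum>l\<in>UNIV. (z l)\<^sup>2)) / 4
       - ((\<Sum>l\<in>UNIV. \<Sum>i\<in>UNIV. \<Sum>j\<in>UNIV. (G l i j)\<^sup>2) / 2 + 1) / r * (1/2 * (\<Sum>i\<in>UNIV. (a i)\<^sup>2))"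
proof -
  define N where "N = (\<Sum>l\<in>UNIV. \<Sum>i\<in>UNIV. \<Sum>j\<in>UNIV. (G l i j)\<^sup>2)"
  define SA where "SA = (\<Sum>i\<in>UNIV. (a i)\<^sup>2)"
  define c where "c j l = (\<Sum>i\<in>UNIV. a i * G l i j)" for j l
  have N0: "N \<ge> 0" unfolding N_def by (intro sum_nonneg) auto
  have SA0: "SA \<ge> 0" unfolding SA_def by (intro sum_nonneg) auto
  have m: "real CARD('m) > 0" by simp
  have P1: "(\<Sum>j\<in>UNIV. \<Sum>i\<in>UNIV. (B i j)\<^sup>2) \<ge> (\<Sum>j\<in>UNIV. B j j)\<^sup>2 / real CARD('m) + lam * (\<Sum>l\<in>UNIV. (z l)\<^sup>2) / 4"
  proof -
    have "(\<Sum>j\<in>UNIV. B j j)\<^sup>2 \<le> (\<Sum>j\<in>UNIV. (B j j)\<^sup>2) * real CARD('m)"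
      using sum_squared_le_sum_of_squares[of "\<lambda>j. B j j" UNIV] by simp
    then have "(\<Sum>j\<in>UNIV. B j j)\<^sup>2 / real CARD('m) \<le> (\<Sum>j\<in>UNIV. (B j j)\<^sup>2)"
      using m by (simp add: divide_le_eq)
    moreover have "(\<Sum>i\<in>UNIV. \<Sum>j\<in>UNIV. (B i j - B j i)\<^sup>2) \<ge> lam * (\<Sum>l\<in>UNIV. (z l)\<^sup>2)"
      using H Bz by simp
    ultimately show ?thesis using sq_sym_bound[of B] by linarith
  qed
  have cr: "(\<Sum>j\<in>UNIV. \<Sum>i\<in>UNIV. a i * (2 * (\<Sum>l\<in>UNIV. G l i j * W j l))) / 4
      = (\<Sum>j\<in>UNIV. \<Sum>l\<in>UNIV. W j l * c j l / 2)"
  proof -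
    have "(\<Sum>j\<in>UNIV. \<Sum>i\<in>UNIV. a i * (2 * (\<Sum>l\<in>UNIV. G l i j * W j l)))
       = (\<Sum>j\<in>UNIV. \<Sum>i\<in>UNIV. \<Sum>l\<in>UNIV. 2 * (a i * G l i j * W j l))"
      by (simp add: sum_distrib_left mult_ac)
    also have "\<dots> = (\<Sum>j\<in>UNIV. \<Sum>l\<in>UNIV. \<Sum>i\<in>UNIV. 2 * (a i * G l i j * W j l))"
      by (rule sum.cong[OF refl], rule sum.swap)
    also have "\<dots> = 4 * (\<Sum>j\<in>UNIV. \<Sum>l\<in>UNIV. W j l * c j l / 2)"
    proof -
      have "(\<Sum>i\<in>UNIV. 2 * (a i * G l i j * W j l)) = 4 * (W j l * c j l / 2)" for j l
        unfolding c_def by (simp add: sum_distrib_left mult_ac)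
      then show ?thesis by (simp add: sum_distrib_left)
    qed
    finally show ?thesis by simp
  qed
  have P2: "(\<Sum>j\<in>UNIV. \<Sum>l\<in>UNIV. W j l * c j l / 2) + r * ((\<Sum>j\<in>UNIV. \<Sum>l\<in>UNIV. (W j l)\<^sup>2) / 4)
      \<ge> - (\<Sum>j\<in>UNIV. \<Sum>l\<in>UNIV. (c j l)\<^sup>2) / (4 * r)"
  proof -
    have "(\<Sum>j\<in>UNIV. \<Sum>l\<in>UNIV. W j l * c j l / 2) + r * ((\<Sum>j\<in>UNIV. \<Sum>l\<in>UNIV. (W j l)\<^sup>2) / 4)
       = (\<Sum>j\<in>UNIV. \<Sum>l\<in>UNIV. W j l * c j l / 2 + r * (W j l)\<^sup>2 / 4)"
      by (simp add: sum.distrib sum_distrib_left sum_divide_distrib)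
    also have "\<dots> \<ge> (\<Sum>j\<in>UNIV. \<Sum>l\<in>UNIV. - (c j l)\<^sup>2 / (4 * r))"
      by (intro sum_mono cross_bound r)
    moreover have "(\<Sum>j\<in>UNIV. \<Sum>l\<in>UNIV. - (c j l)\<^sup>2 / (4 * r)) = - (\<Sum>j\<in>UNIV. \<Sum>l\<in>UNIV. (c j l)\<^sup>2) / (4 * r)"
      by (simp add: sum_negf sum_divide_distrib)
    ultimately show ?thesis by linarith
  qed
  have P3: "(\<Sum>j\<in>UNIV. \<Sum>l\<in>UNIV. (c j l)\<^sup>2) \<le> SA * N"
  proof -
    have "(\<Sum>j\<in>UNIV. \<Sum>l\<in>UNIV. (c j l)\<^sup>2) \<le> (\<Sum>j\<in>UNIV. \<Sum>l\<in>UNIV. SA * (\<Sum>i\<in>UNIV. (G l i j)\<^sup>2))"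
      unfolding c_def SA_def by (intro sum_mono Cauchy_Schwarz_ineq_sum)
    also have "\<dots> = SA * N"
    proof -
      have "(\<Sum>j\<in>UNIV. \<Sum>l\<in>UNIV. \<Sum>i\<in>UNIV. (G l i j)\<^sup>2) = (\<Sum>l\<in>UNIV. \<Sum>j\<in>UNIV. \<Sum>i\<in>UNIV. (G l i j)\<^sup>2)"
        by (rule sum.swap)
      also have "\<dots> = N" unfolding N_def by (rule sum.cong[OF refl], rule sum.swap)
      finally have "(\<Sum>j\<in>UNIV. \<Sum>l\<in>UNIV. \<Sum>i\<in>UNIV. (G l i j)\<^sup>2) = N" .
      then show ?thesis by (simp add: sum_distrib_left[symmetric])
    qed
    finally show ?thesis .
  qed
  have P4: "- (\<Sum>j\<in>UNIV. \<Sum>l\<in>UNIV. (c j l)\<^sup>2) / (4 * r) \<ge> - (N / 2 + 1) / r * (1/2 * SA)"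
  proof -
    have "(\<Sum>j\<in>UNIV. \<Sum>l\<in>UNIV. (c j l)\<^sup>2) / (4 * r) \<le> SA * N / (4 * r)"
      using P3 r by (simp add: divide_right_mono)
    also have "\<dots> \<le> (N / 2 + 1) / r * (1/2 * SA)"
      using r SA0 N0 by (simp add: field_simps)
    finally have "(\<Sum>j\<in>UNIV. \<Sum>l\<in>UNIV. (c j l)\<^sup>2) / (4 * r) \<le> (N / 2 + 1) / r * (1/2 * SA)" .
    then show ?thesis by linarith
  qed
  have e1: "(\<Sum>j\<in>UNIV. \<Sum>i\<in>UNIV. (B i j)\<^sup>2 + a i * (2 * (\<Sum>l\<in>UNIV. G l i j * W j l))) / 4
     = (\<Sum>j\<in>UNIV. \<Sum>i\<in>UNIV. (B i j)\<^sup>2) / 4 + (\<Sum>j\<in>UNIV. \<Sum>i\<in>UNIV. a i * (2 * (\<Sum>l\<in>UNIV. G l i j * W j l))) / 4"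
    by (simp add: sum.distrib add_divide_distrib)
  have e2: "(1/2 * (\<Sum>j\<in>UNIV. B j j))\<^sup>2 / real CARD('m) = (\<Sum>j\<in>UNIV. B j j)\<^sup>2 / real CARD('m) / 4"
    by (simp add: power2_eq_square)
  show ?thesis
  proof -
    have z: "(lam/2) * (1/2 * (\<Sum>l\<in>UNIV. (z l)\<^sup>2)) / 4 = (lam * (\<Sum>l\<in>UNIV. (z l)\<^sup>2) / 4) / 4"
      by simp
    have P1': "(\<Sum>j\<in>UNIV. B j j)\<^sup>2 / real CARD('m) / 4 + lam * (\<Sum>l\<in>UNIV. (z l)\<^sup>2) / 4 / 4
       \<le> (\<Sum>j\<in>UNIV. \<Sum>i\<in>UNIV. (B i j)\<^sup>2) / 4"
      using divide_right_mono[OF P1, of 4] by (simp add: add_divide_distrib)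
    have eqK: "- (N / 2 + 1) / r * (1 / 2 * SA) = - ((N / 2 + 1) / r * (1 / 2 * SA))" by (simp only: minus_divide_left mult_minus_left)
    have P24: "- ((N / 2 + 1) / r * (1 / 2 * SA)) \<le> (\<Sum>j\<in>UNIV. \<Sum>l\<in>UNIV. W j l * c j l / 2) +
       r * ((\<Sum>j\<in>UNIV. \<Sum>l\<in>UNIV. (W j l)\<^sup>2) / 4)" using P2 P4 eqK by linarith
    show ?thesis unfolding z e1 e2 cr N_def[symmetric] SA_def[symmetric]
      using P1' P24 by linarith
  qed
qed



lemma norm_sq_vec: "(norm (a::real^'d::finite))\<^sup>2 = (\<Sum>l\<in>UNIV. (a$l)\<^sup>2)"
  unfolding power2_norm_eq_inner inner_vec_def by (simp add: power2_eq_square)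

theorem lemma4p2:
  assumes "CARD('m::finite) \<ge> 2"
  shows "\<exists>c1 c2 :: ('d::finite \<Rightarrow> real^'m^'m) \<Rightarrow> real.
    (\<forall>G. c1 G > 0 \<and> c2 G > 0) \<and>
    (\<forall>(\<sigma>::real^'m^'m) (A::'d \<Rightarrow> real^'m^'m).
       invertible \<sigma> \<longrightarrow> hoermander (Gmat \<sigma> A) \<longrightarrow>
       (\<forall>(f::(real^'m) \<times> (real^'d) \<Rightarrow> real) (r::real) p.
          Ck 3 f \<longrightarrow> r > 0 \<longrightarrow>
          Gam2 \<sigma> A f p + r * Gam2Z \<sigma> A f p \<ge>
            (Lop \<sigma> A f p)^2 / real CARD('m) + c2 (Gmat \<sigma> A) * GamZ f f p / 4
            - c1 (Gmat \<sigma> A) / r * Gam \<sigma> A f f p))"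
proof -
  define c1 :: "('d \<Rightarrow> real^'m^'m) \<Rightarrow> real" where
    "c1 G = (\<Sum>l\<in>UNIV. \<Sum>i\<in>UNIV. \<Sum>j\<in>UNIV. (G l $ i $ j)\<^sup>2) / 2 + 1" for G
  define lamof :: "('d \<Rightarrow> real^'m^'m) \<Rightarrow> real" where
    "lamof G = (SOME lam. lam > 0 \<and> (\<forall>a::real^'d.
     (\<Sum>i\<in>UNIV. \<Sum>j\<in>UNIV. \<bar>\<Sum>l\<in>UNIV. G l $ i $ j * a $ l\<bar>^2) \<ge> lam * (norm a)^2))" for G
  define c2 :: "('d \<Rightarrow> real^'m^'m) \<Rightarrow> real" where
    "c2 G = (if hoermander G then lamof G / 2 else 1)" for G
  have lam: "lamof G > 0 \<and> (\<forall>a::real^'d.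
     (\<Sum>i\<in>UNIV. \<Sum>j\<in>UNIV. \<bar>\<Sum>l\<in>UNIV. G l $ i $ j * a $ l\<bar>^2) \<ge> lamof G * (norm a)^2)"
    if "hoermander G" for G
  proof -
    from that obtain l0 where "l0 > 0 \<and> (\<forall>a::real^'d.
     (\<Sum>i\<in>UNIV. \<Sum>j\<in>UNIV. \<bar>\<Sum>l\<in>UNIV. G l $ i $ j * a $ l\<bar>^2) \<ge> l0 * (norm a)^2)"
      unfolding hoermander_def by blast
    then show ?thesis unfolding lamof_def by (rule someI)
  qed
  have P1: "\<forall>G. c1 G > 0 \<and> c2 G > 0"
  proof
    fix G :: "'d \<Rightarrow> real^'m^'m"
    have "(\<Sum>l\<in>UNIV. \<Sum>i\<in>UNIV. \<Sum>j\<in>UNIV. (G l $ i $ j)\<^sup>2) \<ge> 0" by (intro sum_nonneg) auto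
    then have "c1 G > 0" unfolding c1_def by linarith
    moreover have "c2 G > 0"
    proof (cases "hoermander G")
      case True then show ?thesis unfolding c2_def using lam[of G] by auto
    next
      case False then show ?thesis unfolding c2_def by auto
    qed
    ultimately show "c1 G > 0 \<and> c2 G > 0" by blast
  qed
  show ?thesis
  proof (rule exI[of _ c1], rule exI[of _ c2], intro conjI P1 allI impI)
    fix \<sigma> :: "real^'m^'m" and A :: "'d \<Rightarrow> real^'m^'m" and f :: "(real^'m) \<times> (real^'d) \<Rightarrow> real"
      and r :: real and p
    assume inv: "invertible \<sigma>" and hoer: "hoermander (Gmat \<sigma> A)" and f3: "Ck 3 f" and r: "r > 0"
    let ?G = "Gmat \<sigma> A"
    let ?X = "Xf \<sigma> A"
    have f: "Good f" and fb: "\<forall>b\<in>Basis. Good (D b f)" using Good_Ck3[OF f3] by auto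
    have lp: "lamof ?G > 0" and lh: "\<And>a::real^'d.
      (\<Sum>i\<in>UNIV. \<Sum>j\<in>UNIV. \<bar>\<Sum>l\<in>UNIV. ?G l $ i $ j * a $ l\<bar>^2) \<ge> lamof ?G * (norm a)^2"
      using lam[OF hoer] by auto
    have H: "(\<Sum>i\<in>UNIV. \<Sum>j\<in>UNIV. (\<Sum>l\<in>UNIV. ?G l $ i $ j * dy l f p)\<^sup>2) \<ge> lamof ?G * (\<Sum>l\<in>UNIV. (dy l f p)\<^sup>2)"
      using lh[of "\<chi> l. dy l f p"] unfolding norm_sq_vec by simp
    have Bz: "\<forall>i j. ?X j (?X i f) p - ?X i (?X j f) p = (\<Sum>l\<in>UNIV. ?G l $ i $ j * dy l f p)"
      using commut[OF f] by blast
    note main = alg[of "\<lambda>i j. ?X j (?X i f) p" "\<lambda>l i j. ?G l $ i $ j" "\<lambda>l. dy l f p" "lamof ?G" r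
        "\<lambda>i. ?X i f p" "\<lambda>j l. ?X j (dy l f) p", OF Bz H r]
    have e2: "Gam2 \<sigma> A f p = (\<Sum>j\<in>UNIV. \<Sum>i\<in>UNIV. (?X j (?X i f) p)\<^sup>2
        + ?X i f p * (2 * (\<Sum>l\<in>UNIV. ?G l $ i $ j * ?X j (dy l f) p))) / 4"
      unfolding Gam2_expand[OF f fb] T_expand[OF f fb] ..
    have e3: "Lop \<sigma> A f p = 1/2 * (\<Sum>j\<in>UNIV. ?X j (?X j f) p)" by (simp add: Lop_def)
    have e4: "GamZ f f p = 1/2 * (\<Sum>l\<in>UNIV. (dy l f p)\<^sup>2)" by (simp add: GamZ_def power2_eq_square)
    have e5: "Gam \<sigma> A f f p = 1/2 * (\<Sum>i\<in>UNIV. (?X i f p)\<^sup>2)" by (simp add: Gam_def power2_eq_square)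
    have e6: "c2 ?G = lamof ?G / 2" using hoer by (simp add: c2_def)
    have e7: "c1 ?G = (\<Sum>l\<in>UNIV. \<Sum>i\<in>UNIV. \<Sum>j\<in>UNIV. (?G l $ i $ j)\<^sup>2) / 2 + 1" by (simp add: c1_def)
    show "Gam2 \<sigma> A f p + r * Gam2Z \<sigma> A f p \<ge>
            (Lop \<sigma> A f p)^2 / real CARD('m) + c2 ?G * GamZ f f p / 4 - c1 ?G / r * Gam \<sigma> A f f p"
      unfolding e2 e3 e4 e5 e6 e7 Gam2Z_expand[OF f fb] using main by simp
  qed
qed

end
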